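(* Let $T$ be a tree on $n$ vertices. Then $k(T)=3$ if and only if $T\in\mathcal{T}$, where $\mathcal{T}$ is the family of trees obtained by appending $b\ge 1$ pendent vertices to each leaf of a star, or to each leaf of a balanced double star (the same $b$ for every leaf).
   Context: For a connected graph $G=(V,E)$ and $v\in V$, the status of $v$ is $s(v)=\sum_{u\in V} d(v,u)$, where $d$ is the shortest-path distance; $k(G)$ is the number of distinct status values of vertices of $G$. A star is a tree of diameter $2$, i.e. $K_{1,m}$ with $m\ge 2$. A balanced double star is a graph obtained from $K_2$ by appending $a\ge 1$ pendent vertices to each of its two vertices (the same $a$ for both). *)

theory Defs
  imports Main
begin

definition simple_graph :: "'a set \<Rightarrow> ('a \<Rightarrow> 'a \<Rightarrow> bool) \<Rightarrow> bool" where
  "simple_graph V E \<longleftrightarrow> finite V \<and> (\<forall>x y. E x y \<longrightarrow> x \<in> V \<and> y \<in> V)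
     \<and> (\<forall>x y. E x y \<longrightarrow> E y x) \<and> (\<forall>x. \<not> E x x)"

definition is_walk :: "'a set \<Rightarrow> ('a \<Rightarrow> 'a \<Rightarrow> bool) \<Rightarrow> 'a list \<Rightarrow> bool" where
  "is_walk V E xs \<longleftrightarrow> xs \<noteq> [] \<and> set xs \<subseteq> V
     \<and> (\<forall>i. Suc i < length xs \<longrightarrow> E (xs ! i) (xs ! Suc i))"

definition connected_graph :: "'a set \<Rightarrow> ('a \<Rightarrow> 'a \<Rightarrow> bool) \<Rightarrow> bool" where
  "connected_graph V E \<longleftrightarrow> V \<noteq> {} \<and>
     (\<forall>u\<in>V. \<forall>v\<in>V. \<exists>xs. is_walk V E xs \<and> hd xs = u \<and> last xs = v)"

definition has_cycle :: "'a set \<Rightarrow> ('a \<Rightarrow> 'a \<Rightarrow> bool) \<Rightarrow> bool" where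
  "has_cycle V E \<longleftrightarrow> (\<exists>xs. is_walk V E xs \<and> distinct xs \<and> length xs \<ge> 3 \<and> E (last xs) (hd xs))"

definition is_tree :: "'a set \<Rightarrow> ('a \<Rightarrow> 'a \<Rightarrow> bool) \<Rightarrow> bool" where
  "is_tree V E \<longleftrightarrow> simple_graph V E \<and> connected_graph V E \<and> \<not> has_cycle V E"

definition dist :: "'a set \<Rightarrow> ('a \<Rightarrow> 'a \<Rightarrow> bool) \<Rightarrow> 'a \<Rightarrow> 'a \<Rightarrow> nat" where
  "dist V E u v = (LEAST n. \<exists>xs. is_walk V E xs \<and> hd xs = u \<and> last xs = v \<and> length xs = Suc n)"

definition status :: "'a set \<Rightarrow> ('a \<Rightarrow> 'a \<Rightarrow> bool) \<Rightarrow> 'a \<Rightarrow> nat" where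
  "status V E v = (\<Sum>u\<in>V. dist V E v u)"

definition num_status :: "'a set \<Rightarrow> ('a \<Rightarrow> 'a \<Rightarrow> bool) \<Rightarrow> nat" where
  "num_status V E = card (status V E ` V)"

text \<open>Model graphs of the family: c centres forming a clique (c = 1: star centre;
  c = 2: the K2 of a double star), each centre s carries l leaves Lf s i, and each
  such leaf carries b pendent vertices Pd s i j.\<close>
datatype mvtx = Ctr nat | Lf nat nat | Pd nat nat nat

definition model_verts :: "nat \<Rightarrow> nat \<Rightarrow> nat \<Rightarrow> mvtx set" where
  "model_verts c l b = {Ctr s | s. s < c} \<union> {Lf s i | s i. s < c \<and> i < l}
     \<union> {Pd s i j | s i j. s < c \<and> i < l \<and> j < b}"

fun model_adj0 :: "mvtx \<Rightarrow> mvtx \<Rightarrow> bool" where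
  "model_adj0 (Ctr s) (Ctr t) = (s < t)"
| "model_adj0 (Ctr s) (Lf t i) = (s = t)"
| "model_adj0 (Lf s i) (Pd t i' j) = (s = t \<and> i = i')"
| "model_adj0 _ _ = False"

definition model_adj :: "nat \<Rightarrow> nat \<Rightarrow> nat \<Rightarrow> mvtx \<Rightarrow> mvtx \<Rightarrow> bool" where
  "model_adj c l b x y \<longleftrightarrow> x \<in> model_verts c l b \<and> y \<in> model_verts c l b
     \<and> (model_adj0 x y \<or> model_adj0 y x)"

definition in_family :: "'a set \<Rightarrow> ('a \<Rightarrow> 'a \<Rightarrow> bool) \<Rightarrow> bool" where
  "in_family V E \<longleftrightarrow> (\<exists>c l b. b \<ge> 1 \<and> ((c = 1 \<and> l \<ge> 2) \<or> (c = 2 \<and> l \<ge> 1)) \<and>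
     (\<exists>f. bij_betw f V (model_verts c l b) \<and>
          (\<forall>x\<in>V. \<forall>y\<in>V. E x y \<longleftrightarrow> model_adj c l b (f x) (f y))))"

end

theory Submission
  imports Defs
begin


fun wk :: "'a set \<Rightarrow> ('a \<Rightarrow> 'a \<Rightarrow> bool) \<Rightarrow> 'a list \<Rightarrow> bool" where
  "wk V E [] = False"
| "wk V E [x] = (x \<in> V)"
| "wk V E (x # y # xs) = (x \<in> V \<and> E x y \<and> wk V E (y # xs))"

lemma is_walk_wk: "is_walk V E xs = wk V E xs"
proof (induction V E xs rule: wk.induct)
  case (1 V E) then show ?case by (simp add: is_walk_def)
next
  case (2 V E x) then show ?case by (simp add: is_walk_def)
next
  case (3 V E x y xs)
  have "is_walk V E (x # y # xs) = (x \<in> V \<and> E x y \<and> is_walk V E (y # xs))"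
    unfolding is_walk_def
    apply (auto simp: nth_Cons split: nat.splits)
    done
  with 3 show ?case by simp
qed

lemma wk_nonempty: "wk V E xs \<Longrightarrow> xs \<noteq> []"
  by (cases xs) auto

lemma wk_set: "wk V E xs \<Longrightarrow> set xs \<subseteq> V"
  by (induction V E xs rule: wk.induct) auto

lemma wk_append: "xs \<noteq> [] \<Longrightarrow> ys \<noteq> [] \<Longrightarrow>
   wk V E (xs @ ys) = (wk V E xs \<and> wk V E ys \<and> E (last xs) (hd ys))"
proof (induction xs rule: induct_list012)
  case 1 then show ?case by simp
next
  case (2 x) then show ?case by (cases ys) auto
next
  case (3 x y zs) then show ?case by auto
qed

lemma wk_rev: "(\<And>x y. E x y \<Longrightarrow> E y x) \<Longrightarrow> wk V E xs \<Longrightarrow> wk V E (rev xs)"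
proof (induction xs rule: induct_list012)
  case 1 then show ?case by simp
next
  case (2 x) then show ?case by simp
next
  case (3 x y zs)
  have "wk V E (rev (y # zs))" using 3 by simp
  moreover have "wk V E [x]" using 3 by simp
  ultimately show ?case using 3 wk_append[of "rev (y # zs)" "[x]" V E] by simp
qed

lemma wk_snoc: "xs \<noteq> [] \<Longrightarrow> wk V E (xs @ [y]) = (wk V E xs \<and> y \<in> V \<and> E (last xs) y)"
  using wk_append[of xs "[y]" V E] by auto

context
  fixes V :: "'a set" and E :: "'a \<Rightarrow> 'a \<Rightarrow> bool"
  assumes sg: "simple_graph V E" and cg: "connected_graph V E"
begin

lemma g_E_sym: "E x y \<Longrightarrow> E y x" using sg unfolding simple_graph_def by blast
lemma g_E_V: "E x y \<Longrightarrow> x \<in> V \<and> y \<in> V" using sg unfolding simple_graph_def by blast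
lemma g_E_irr: "\<not> E x x" using sg unfolding simple_graph_def by blast
lemma g_V_fin: "finite V" using sg unfolding simple_graph_def by blast

lemma g_walk_ex: assumes "u \<in> V" "v \<in> V"
  shows "\<exists>xs. wk V E xs \<and> hd xs = u \<and> last xs = v \<and> length xs = Suc (dist V E u v)"
proof -
  obtain xs where "is_walk V E xs" "hd xs = u" "last xs = v"
    using cg assms unfolding connected_graph_def by blast
  moreover have "length xs = Suc (length xs - 1)" using \<open>is_walk V E xs\<close>
    by (cases xs) (auto simp: is_walk_def)
  ultimately have "\<exists>n xs. is_walk V E xs \<and> hd xs = u \<and> last xs = v \<and> length xs = Suc n" by blast
  from LeastI_ex[OF this] show ?thesis unfolding dist_def is_walk_wk .
qed

lemma g_dist_le: "wk V E xs \<Longrightarrow> hd xs = u \<Longrightarrow> last xs = v \<Longrightarrow> length xs = Suc k \<Longrightarrow> dist V E u v \<le> k"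
  unfolding dist_def by (rule Least_le) (auto simp: is_walk_wk)

lemma g_dist_self: "u \<in> V \<Longrightarrow> dist V E u u = 0"
  using g_dist_le[of "[u]" u u 0] by simp

lemma g_dist_0: assumes "u \<in> V" "v \<in> V" "dist V E u v = 0" shows "u = v"
proof -
  obtain xs where "wk V E xs" "hd xs = u" "last xs = v" "length xs = Suc 0"
    using g_walk_ex assms by fastforce
  then show ?thesis by (cases xs) auto
qed

lemma g_dist_sym: assumes "u \<in> V" "v \<in> V" shows "dist V E u v = dist V E v u"
proof -
  have *: "dist V E b a \<le> dist V E a b" if ab: "a \<in> V" "b \<in> V" for a b
  proof -
    obtain xs where "wk V E xs" "hd xs = a" "last xs = b" "length xs = Suc (dist V E a b)"
      using g_walk_ex[OF ab] by blast
    moreover have "wk V E (rev xs)" using wk_rev[of E V xs] g_E_sym \<open>wk V E xs\<close> by blast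
    ultimately show ?thesis using g_dist_le[of "rev xs" b a "dist V E a b"]
      by (simp add: hd_rev last_rev)
  qed
  show ?thesis using *[of u v] *[of v u] assms by simp
qed

lemma g_dist_tri: assumes "u \<in> V" "v \<in> V" "w \<in> V"
  shows "dist V E u w \<le> dist V E u v + dist V E v w"
proof -
  obtain xs where xs: "wk V E xs" "hd xs = u" "last xs = v" "length xs = Suc (dist V E u v)"
    using g_walk_ex assms by blast
  obtain ys where ys: "wk V E ys" "hd ys = v" "last ys = w" "length ys = Suc (dist V E v w)"
    using g_walk_ex assms by blast
  show ?thesis
  proof (cases "tl ys = []")
    case True
    then have "ys = [v]" using ys by (cases ys) auto
    then show ?thesis using xs ys by (simp add: g_dist_le)
  next
    case False
    obtain y ys' where ys': "ys = v # y # ys'" using ys False by (cases ys; cases "tl ys") auto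
    then have "wk V E (tl ys)" "E v (hd (tl ys))" using ys by auto
    then have "wk V E (xs @ tl ys)" using xs False wk_append wk_nonempty by metis
    moreover have "hd (xs @ tl ys) = u" using xs wk_nonempty[OF xs(1)] by simp
    moreover have "last (xs @ tl ys) = w" using ys ys' False by simp
    moreover have "length (xs @ tl ys) = Suc (dist V E u v + dist V E v w)" using xs ys by simp
    ultimately show ?thesis by (rule g_dist_le)
  qed
qed

lemma g_dist_edge: "E u v \<Longrightarrow> dist V E u v = 1"
proof -
  assume e: "E u v"
  have "dist V E u v \<le> 1" using g_dist_le[of "[u,v]" u v 1] e g_E_V by auto
  moreover have "dist V E u v \<noteq> 0" using g_dist_0 e g_E_V g_E_irr by metis
  ultimately show ?thesis by simp
qed

lemma g_dist_adj: assumes "E u v" "x \<in> V" shows "dist V E x u \<le> dist V E x v + 1"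
  using g_dist_tri[of x v u] g_dist_edge[of v u] g_E_sym assms g_E_V by fastforce

lemma g_dist_pred: assumes "x \<in> V" "y \<in> V" "dist V E x y = Suc k"
  shows "\<exists>u. E u y \<and> dist V E x u = k"
proof -
  obtain xs where xs: "wk V E xs" "hd xs = x" "last xs = y" "length xs = Suc (Suc k)"
    using g_walk_ex assms by fastforce
  let ?b = "butlast xs"
  have eq: "xs = ?b @ [y]" using xs wk_nonempty by (metis append_butlast_last_id)
  have nb: "?b \<noteq> []" using xs by (cases xs) auto
  have w: "wk V E ?b" and e: "E (last ?b) y" using xs eq nb wk_snoc by metis+
  have "dist V E x (last ?b) \<le> k"
    using g_dist_le[OF w] xs nb eq by (metis hd_append2 length_butlast diff_Suc_1)
  moreover have "Suc k \<le> dist V E x (last ?b) + 1"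
    using g_dist_adj[OF g_E_sym[OF e] assms(1)] assms by simp
  ultimately show ?thesis using e by (intro exI[of _ "last ?b"]) simp
qed

end

context
  fixes V :: "'a set" and E :: "'a \<Rightarrow> 'a \<Rightarrow> bool"
  assumes tr: "is_tree V E"
begin

lemma sg: "simple_graph V E" and cg: "connected_graph V E" and nc: "\<not> has_cycle V E"
  using tr unfolding is_tree_def by auto

lemmas E_sym = g_E_sym[OF sg cg] and E_V = g_E_V[OF sg cg] and E_irr = g_E_irr[OF sg cg]
  and V_fin = g_V_fin[OF sg cg] and dist_le = g_dist_le[OF sg cg] and dist_self = g_dist_self[OF sg cg]
  and dist_0 = g_dist_0[OF sg cg] and dist_sym = g_dist_sym[OF sg cg] and dist_tri = g_dist_tri[OF sg cg]
  and dist_edge = g_dist_edge[OF sg cg] and dist_adj = g_dist_adj[OF sg cg] and dist_pred = g_dist_pred[OF sg cg]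

lemma cyc_aux:
  assumes "x \<in> V"
  shows "p \<noteq> q \<Longrightarrow> dist V E x p = k \<Longrightarrow> dist V E x q = k \<Longrightarrow> wk V E R \<Longrightarrow> distinct R
    \<Longrightarrow> hd R = p \<Longrightarrow> last R = q \<Longrightarrow> (\<forall>y\<in>set R. k \<le> dist V E x y) \<Longrightarrow> False"
proof (induction k arbitrary: p q R)
  case 0
  have "p \<in> V" "q \<in> V" using 0 wk_set wk_nonempty by (metis hd_in_set last_in_set subsetD)+
  then show ?case using 0 dist_0 assms by metis
next
  case (Suc k)
  have pV: "p \<in> V" and qV: "q \<in> V" using Suc.prems wk_set wk_nonempty by (metis hd_in_set last_in_set subsetD)+
  obtain p' where p': "E p' p" "dist V E x p' = k" using dist_pred[OF assms pV] Suc.prems by blast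
  obtain q' where q': "E q' q" "dist V E x q' = k" using dist_pred[OF assms qV] Suc.prems by blast
  have p'V: "p' \<in> V" and q'V: "q' \<in> V" using p' q' E_V by auto
  have Rne: "R \<noteq> []" using Suc.prems wk_nonempty by blast
  have p'R: "p' \<notin> set R" and q'R: "q' \<notin> set R" using Suc.prems p' q' by fastforce+
  show ?case
  proof (cases "p' = q'")
    case True
    have "length R \<ge> 2" using Suc.prems Rne by (cases R rule: remdups_adj.cases) auto
    moreover have "wk V E (p' # R)" using Suc.prems Rne p' p'V by (cases R) auto
    moreover have "distinct (p' # R)" using Suc.prems p'R by simp
    moreover have "E (last (p' # R)) (hd (p' # R))" using Suc.prems Rne E_sym[OF q'(1)] True by simp
    ultimately have "has_cycle V E" unfolding has_cycle_def is_walk_wk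
      by (intro exI[of _ "p' # R"]) simp
    then show False using nc by blast
  next
    case False
    let ?R = "p' # R @ [q']"
    have "wk V E (R @ [q'])" using wk_snoc[OF Rne] Suc.prems q'V E_sym[OF q'(1)] by simp
    then have "wk V E ?R" using Suc.prems Rne p' p'V by (cases R) auto
    moreover have "distinct ?R" using Suc.prems p'R q'R False by simp
    moreover have "\<forall>y\<in>set ?R. k \<le> dist V E x y" using Suc.prems p' q' by force
    ultimately show False using Suc.IH[of p' q' ?R] False p' q' Rne by simp
  qed
qed

lemma P1: assumes "E u v" "x \<in> V" shows "dist V E x u \<noteq> dist V E x v"
proof
  assume eq: "dist V E x u = dist V E x v"
  have uv: "u \<noteq> v" using assms(1) E_irr by metis
  have uV: "u \<in> V" and vV: "v \<in> V" using E_V[OF assms(1)] by auto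
  have w: "wk V E [u,v]" using uV vV assms(1) by simp
  have d: "distinct [u,v]" using uv by simp
  have a: "\<forall>y\<in>set [u,v]. dist V E x u \<le> dist V E x y" using eq by simp
  show False
    using cyc_aux[OF assms(2) uv refl eq[symmetric] w d _ _ a] by simp
qed

lemma P2: assumes "E c v" "E v w" "c \<noteq> w" "x \<in> V"
  "dist V E x c < dist V E x v" "dist V E x w < dist V E x v"
  shows False
proof -
  have h1: "dist V E x v \<le> dist V E x w + 1" using dist_adj[OF assms(2) assms(4)] .
  have h2: "dist V E x v \<le> dist V E x c + 1" using dist_adj[OF E_sym[OF assms(1)] assms(4)] .
  have eq: "dist V E x c = dist V E x w" using assms(5,6) h1 h2 by linarith
  have cV: "c \<in> V" and vV: "v \<in> V" and wV: "w \<in> V" using E_V assms(1,2) by auto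
  have wk: "wk V E [c,v,w]" using cV vV wV assms(1,2) by simp
  have "c \<noteq> v" "v \<noteq> w" using assms(1,2) E_irr by metis+
  then have d: "distinct [c,v,w]" using assms(3) by simp
  have a: "\<forall>y\<in>set [c,v,w]. dist V E x c \<le> dist V E x y" using eq assms(5) by auto
  show False
    using cyc_aux[OF assms(4) assms(3) refl eq[symmetric] wk d _ _ a] by simp
qed

end



definition Aside :: "'a set \<Rightarrow> ('a \<Rightarrow> 'a \<Rightarrow> bool) \<Rightarrow> 'a \<Rightarrow> 'a \<Rightarrow> 'a set" where
  "Aside V E y x = {z \<in> V. dist V E z y < dist V E z x}"

definition nb :: "('a \<Rightarrow> 'a \<Rightarrow> bool) \<Rightarrow> 'a \<Rightarrow> 'a set" where
  "nb E x = {y. E x y}"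

context
  fixes V :: "'a set" and E :: "'a \<Rightarrow> 'a \<Rightarrow> bool"
  assumes tr: "is_tree V E"
begin

lemma nb_V: "nb E x \<subseteq> V" using E_V[OF tr] unfolding nb_def by auto
lemma nb_fin: "finite (nb E x)" using nb_V V_fin[OF tr] finite_subset by blast
lemma Aside_fin: "finite (Aside V E y x)" using V_fin[OF tr] unfolding Aside_def by simp

lemma Aside_un: assumes "E u v" shows "Aside V E u v \<union> Aside V E v u = V"
  using P1[OF tr assms] unfolding Aside_def by (auto simp: nat_neq_iff)

lemma Aside_dis: "Aside V E u v \<inter> Aside V E v u = {}"
  unfolding Aside_def by auto

lemma Aside_card: assumes "E u v" shows "card (Aside V E u v) + card (Aside V E v u) = card V"
  using card_Un_disjoint[OF Aside_fin Aside_fin Aside_dis, of u v] Aside_un[OF assms] by simp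

lemma status_diff: assumes "E u v"
  shows "int (status V E v) - int (status V E u) = int (card V) - 2 * int (card (Aside V E v u))"
proof -
  have uV: "u \<in> V" and vV: "v \<in> V" using E_V[OF tr assms] by auto
  have *: "int (dist V E v z) - int (dist V E u z) = (if z \<in> Aside V E u v then 1 else -1)" if z: "z \<in> V" for z
  proof -
    have a: "dist V E z u \<le> dist V E z v + 1" using dist_adj[OF tr assms z] .
    have b: "dist V E z v \<le> dist V E z u + 1" using dist_adj[OF tr E_sym[OF tr assms] z] .
    have c: "dist V E z u \<noteq> dist V E z v" using P1[OF tr assms z] .
    have "dist V E v z = dist V E z v" "dist V E u z = dist V E z u"
      using dist_sym[OF tr] z uV vV by auto
    then show ?thesis using a b c z unfolding Aside_def by auto
  qed
  have "int (status V E v) - int (status V E u) = (\<Sum>z\<in>V. int (dist V E v z) - int (dist V E u z))"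
    unfolding status_def by (simp add: sum_subtractf)
  also have "\<dots> = (\<Sum>z\<in>V. (if z \<in> Aside V E u v then 1 else -1))"
    using * by (rule sum.cong[OF refl])
  also have "\<dots> = int (card (Aside V E u v)) - int (card (Aside V E v u))"
  proof -
    have "V = Aside V E u v \<union> Aside V E v u" using Aside_un[OF assms] by simp
    then have "(\<Sum>z\<in>V. (if z \<in> Aside V E u v then 1 else -1) :: int)
       = (\<Sum>z\<in>Aside V E u v. (if z \<in> Aside V E u v then 1 else -1)) + (\<Sum>z\<in>Aside V E v u. (if z \<in> Aside V E u v then 1 else -1))"
      using sum.union_disjoint[OF Aside_fin Aside_fin Aside_dis] by metis
    also have "\<dots> = (\<Sum>z\<in>Aside V E u v. 1) + (\<Sum>z\<in>Aside V E v u. -1)"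
      using Aside_dis[of u v] by (intro arg_cong2[where f="(+)"] sum.cong) auto
    finally show ?thesis by simp
  qed
  finally show ?thesis using Aside_card[OF assms] by linarith
qed

lemma Aside_self: "y \<in> V \<Longrightarrow> E y x \<Longrightarrow> y \<in> Aside V E y x"
  unfolding Aside_def using dist_self[OF tr] dist_edge[OF tr] by simp

lemma Aside_notin: "E z y \<Longrightarrow> y \<notin> Aside V E z y"
  unfolding Aside_def using E_V[OF tr] dist_self[OF tr] by auto

lemma Aside_sub: assumes "E y x" "E y z" "z \<noteq> x" shows "Aside V E z y \<subseteq> Aside V E y x"
proof
  fix t assume t: "t \<in> Aside V E z y"
  then have tV: "t \<in> V" and lt: "dist V E t z < dist V E t y" unfolding Aside_def by auto
  have "\<not> dist V E t x < dist V E t y"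
    using P2[OF tr E_sym[OF tr assms(1)] assms(2) assms(3)[symmetric] tV] lt by blast
  moreover have "dist V E t x \<noteq> dist V E t y" using P1[OF tr E_sym[OF tr assms(1)] tV] .
  ultimately show "t \<in> Aside V E y x" using tV unfolding Aside_def by auto
qed

lemma Aside_eq: assumes "E y x"
  shows "Aside V E y x = insert y (\<Union>z \<in> nb E y - {x}. Aside V E z y)"
proof
  have yV: "y \<in> V" using E_V[OF tr assms] by simp
  show "insert y (\<Union>z \<in> nb E y - {x}. Aside V E z y) \<subseteq> Aside V E y x"
    using Aside_self[OF yV assms] Aside_sub[OF assms] unfolding nb_def by blast
  show "Aside V E y x \<subseteq> insert y (\<Union>z \<in> nb E y - {x}. Aside V E z y)"
  proof
    fix t assume t: "t \<in> Aside V E y x"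
    then have tV: "t \<in> V" and lt: "dist V E t y < dist V E t x" unfolding Aside_def by auto
    show "t \<in> insert y (\<Union>z \<in> nb E y - {x}. Aside V E z y)"
    proof (cases "t = y")
      case True then show ?thesis by simp
    next
      case False
      then have "dist V E t y \<noteq> 0" using dist_0[OF tr tV yV] by blast
      then obtain k where k: "dist V E t y = Suc k" by (cases "dist V E t y") auto
      obtain u where u: "E u y" "dist V E t u = k" using dist_pred[OF tr tV yV k] by blast
      have "u \<noteq> x" using u k lt by auto
      moreover have "t \<in> Aside V E u y" using u k tV unfolding Aside_def by simp
      ultimately show ?thesis using E_sym[OF tr u(1)] unfolding nb_def by blast
    qed
  qed
qed

lemma Aside_disj: assumes "E y z1" "E y z2" "z1 \<noteq> z2"
  shows "Aside V E z1 y \<inter> Aside V E z2 y = {}"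
proof -
  have "False" if "t \<in> Aside V E z1 y" "t \<in> Aside V E z2 y" for t
    using that P2[OF tr E_sym[OF tr assms(1)] assms(2) assms(3)] unfolding Aside_def by auto
  then show ?thesis by blast
qed

lemma Aside_card_eq: assumes "E y x"
  shows "card (Aside V E y x) = Suc (\<Sum>z \<in> nb E y - {x}. card (Aside V E z y))"
proof -
  have fin: "finite (nb E y - {x})" using nb_fin by simp
  have "card (\<Union>z \<in> nb E y - {x}. Aside V E z y) = (\<Sum>z \<in> nb E y - {x}. card (Aside V E z y))"
    by (rule card_UN_disjoint[OF fin]) (auto simp: Aside_fin nb_def dest: Aside_disj)
  moreover have "y \<notin> (\<Union>z \<in> nb E y - {x}. Aside V E z y)"
    using Aside_notin E_sym[OF tr] unfolding nb_def by blast
  moreover have "finite (\<Union>z \<in> nb E y - {x}. Aside V E z y)" using fin Aside_fin by blast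
  ultimately show ?thesis using Aside_eq[OF assms] by simp
qed

lemma convex: assumes "E x y" "E y z" "x \<noteq> z"
  shows "int (status V E z) - int (status V E y) > int (status V E y) - int (status V E x)"
proof -
  have yV: "y \<in> V" using E_V[OF tr assms(1)] by simp
  have sub: "Aside V E z y \<subseteq> Aside V E y x"
    using Aside_sub[OF E_sym[OF tr assms(1)] assms(2)] assms(3) by blast
  have "y \<in> Aside V E y x" using Aside_self[OF yV E_sym[OF tr assms(1)]] .
  moreover have "y \<notin> Aside V E z y" using Aside_notin[OF E_sym[OF tr assms(2)]] .
  ultimately have "Aside V E z y \<subset> Aside V E y x" using sub by blast
  then have "card (Aside V E z y) < card (Aside V E y x)"
    by (rule psubset_card_mono[OF Aside_fin])
  then show ?thesis using status_diff[OF assms(1)] status_diff[OF assms(2)] by linarith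
qed

end



definition STRUCT :: "'a set \<Rightarrow> ('a \<Rightarrow> 'a \<Rightarrow> bool) \<Rightarrow> 'a \<Rightarrow> 'a \<Rightarrow> nat \<Rightarrow> nat \<Rightarrow> bool" where
 "STRUCT V E c c' l b \<longleftrightarrow> c \<in> V \<and> c' \<in> V \<and> (c = c' \<or> E c c') \<and> b \<ge> 1
   \<and> ((c = c' \<and> l \<ge> 2) \<or> (c \<noteq> c' \<and> l \<ge> 1))
   \<and> (\<forall>z\<in>{c,c'}. card (nb E z - {c,c'}) = l)
   \<and> (\<forall>z\<in>{c,c'}. \<forall>v\<in>nb E z - {c,c'}. card (nb E v - {z}) = b \<and> (\<forall>w\<in>nb E v - {z}. nb E w = {v}))
   \<and> (\<forall>x\<in>V. x \<in> {c,c'} \<or> (\<exists>z\<in>{c,c'}. x \<in> nb E z - {c,c'})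
          \<or> (\<exists>z\<in>{c,c'}. \<exists>v\<in>nb E z - {c,c'}. x \<in> nb E v - {z}))"


lemma STRUCT_D: "STRUCT V E c c' l b \<Longrightarrow> c \<in> V \<and> c' \<in> V \<and> (c = c' \<or> E c c') \<and> b \<ge> 1
   \<and> ((c = c' \<and> l \<ge> 2) \<or> (c \<noteq> c' \<and> l \<ge> 1))"
  unfolding STRUCT_def by simp

lemma STRUCT_lcard: assumes "STRUCT V E c c' l b" "z \<in> {c,c'}" shows "card (nb E z - {c,c'}) = l"
proof -
  have "\<forall>z\<in>{c,c'}. card (nb E z - {c,c'}) = l" using assms(1) unfolding STRUCT_def by (elim conjE)
  then show ?thesis using assms(2) by (rule bspec)
qed
lemma STRUCT_bp: assumes "STRUCT V E c c' l b" "z \<in> {c,c'}" "v \<in> nb E z - {c,c'}"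
  shows "card (nb E v - {z}) = b \<and> (\<forall>w\<in>nb E v - {z}. nb E w = {v})"
proof -
  have "\<forall>z\<in>{c,c'}. \<forall>v\<in>nb E z - {c,c'}. card (nb E v - {z}) = b \<and> (\<forall>w\<in>nb E v - {z}. nb E w = {v})"
    using assms(1) unfolding STRUCT_def by (elim conjE)
  then have "\<forall>v\<in>nb E z - {c,c'}. card (nb E v - {z}) = b \<and> (\<forall>w\<in>nb E v - {z}. nb E w = {v})"
    using assms(2) by (rule bspec)
  then show ?thesis using assms(3) by (rule bspec)
qed
lemma STRUCT_bcard: assumes "STRUCT V E c c' l b" "z \<in> {c,c'}" "v \<in> nb E z - {c,c'}" shows "card (nb E v - {z}) = b"
  using STRUCT_bp[OF assms] by (rule conjunct1)
lemma STRUCT_pend: assumes "STRUCT V E c c' l b" "z \<in> {c,c'}" "v \<in> nb E z - {c,c'}" "w \<in> nb E v - {z}" shows "nb E w = {v}"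
proof -
  have "\<forall>w\<in>nb E v - {z}. nb E w = {v}" using STRUCT_bp[OF assms(1-3)] by (rule conjunct2)
  then show ?thesis using assms(4) by (rule bspec)
qed
lemma STRUCT_cover: assumes "STRUCT V E c c' l b" "x \<in> V" shows "x \<in> {c,c'} \<or> (\<exists>z\<in>{c,c'}. x \<in> nb E z - {c,c'})
          \<or> (\<exists>z\<in>{c,c'}. \<exists>v\<in>nb E z - {c,c'}. x \<in> nb E v - {z})"
proof -
  have "\<forall>x\<in>V. x \<in> {c,c'} \<or> (\<exists>z\<in>{c,c'}. x \<in> nb E z - {c,c'})
          \<or> (\<exists>z\<in>{c,c'}. \<exists>v\<in>nb E z - {c,c'}. x \<in> nb E v - {z})"
    using assms(1) unfolding STRUCT_def by (elim conjE)
  then show ?thesis using assms(2) by (rule bspec)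
qed


context
  fixes V :: "'a set" and E :: "'a \<Rightarrow> 'a \<Rightarrow> bool"
  assumes tr: "is_tree V E"
begin

lemma struct_status:
  assumes st: "STRUCT V E c c' l b"
  shows "num_status V E = 3"
proof -
  define n where "n = card V"
  define S where "S = (\<lambda>x. int (status V E x))"
  have cV: "c \<in> V" and c'V: "c' \<in> V" and cc: "c = c' \<or> E c c'" and b1: "b \<ge> 1"
    and lcase: "(c = c' \<and> l \<ge> 2) \<or> (c \<noteq> c' \<and> l \<ge> 1)"
    using STRUCT_D[OF st] by auto
  note lcard = STRUCT_lcard[OF st] and bcard = STRUCT_bcard[OF st] and pend = STRUCT_pend[OF st]
    and cover = STRUCT_cover[OF st]
  have Esym: "\<And>x y. E x y \<Longrightarrow> E y x" using E_sym[OF tr] .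
  have pA: "card (Aside V E w v) = 1" if "z \<in> {c,c'}" "v \<in> nb E z - {c,c'}" "w \<in> nb E v - {z}" for z v w
  proof -
    have "E w v" using that Esym unfolding nb_def by auto
    then show ?thesis using Aside_card_eq[OF tr, of w v] pend[OF that] by simp
  qed
  have lA: "card (Aside V E v z) = Suc b" if z: "z \<in> {c,c'}" and v: "v \<in> nb E z - {c,c'}" for z v
  proof -
    have "E v z" using v Esym unfolding nb_def by auto
    then have "card (Aside V E v z) = Suc (\<Sum>w \<in> nb E v - {z}. card (Aside V E w v))"
      by (rule Aside_card_eq[OF tr])
    also have "\<dots> = Suc (\<Sum>w \<in> nb E v - {z}. 1)" using pA[OF z v] by simp
    finally show ?thesis using bcard[OF z v] by simp
  qed
  have Sleaf: "S v = S z + int n - 2 * int (Suc b)" if z: "z \<in> {c,c'}" and v: "v \<in> nb E z - {c,c'}" for z v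
  proof -
    have "E z v" using v unfolding nb_def by auto
    then show ?thesis using status_diff[OF tr, of z v] lA[OF z v] unfolding S_def n_def by simp
  qed
  have Spend: "S w = S v + int n - 2" if z: "z \<in> {c,c'}" and v: "v \<in> nb E z - {c,c'}" and w: "w \<in> nb E v - {z}" for z v w
  proof -
    have "E v w" using w unfolding nb_def by auto
    then show ?thesis using status_diff[OF tr, of v w] pA[OF z v w] unfolding S_def n_def by simp
  qed
  have cent: "S c' = S c \<and> int n > 2 + 2 * int b"
  proof (cases "c = c'")
    case True
    then have l2: "l \<ge> 2" using lcase by auto
    have "card (nb E c - {c,c'}) = l" using lcard by simp
    then obtain v0 where v0: "v0 \<in> nb E c - {c,c'}" using l2 by (metis all_not_in_conv card.empty not_numeral_le_zero)
    have ecv: "E c v0" "E v0 c" using v0 Esym unfolding nb_def by auto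
    have "card (Aside V E c v0) = Suc (\<Sum>v \<in> nb E c - {v0}. card (Aside V E v c))"
      by (rule Aside_card_eq[OF tr ecv(1)])
    also have "\<dots> = Suc (\<Sum>v \<in> nb E c - {v0}. Suc b)"
    proof -
      have "v \<in> nb E c - {c,c'}" if "v \<in> nb E c - {v0}" for v
        using that True E_irr[OF tr] unfolding nb_def by auto
      then show ?thesis using lA[of c] by simp
    qed
    also have "\<dots> = Suc ((l - 1) * Suc b)"
    proof -
      have "nb E c - {c,c'} = nb E c" using True E_irr[OF tr] unfolding nb_def by auto
      then have "card (nb E c) = l" using lcard[of c] by simp
      then have "card (nb E c - {v0}) = l - 1" using v0 nb_fin[OF tr] by simp
      then show ?thesis by simp
    qed
    finally have "card (Aside V E c v0) = Suc ((l - 1) * Suc b)" .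
    moreover have "card (Aside V E v0 c) = Suc b" using lA[of c v0] v0 by simp
    ultimately have "n = Suc b + Suc ((l - 1) * Suc b)" using Aside_card[OF tr ecv(1)] unfolding n_def by simp
    then have "n = 1 + l * Suc b" using l2 by (cases l) auto
    moreover have "l * Suc b \<ge> 2 * Suc b" using l2 by (intro mult_right_mono) auto
    ultimately have "n > 2 + 2 * b" by simp
    then have "int n > int (2 + 2 * b)" by (simp only: of_nat_less_iff)
    then show ?thesis using True by simp
  next
    case False
    then have l1: "l \<ge> 1" and e: "E c c'" using lcase cc by auto
    have side: "card (Aside V E z z') = Suc (l * Suc b)" if zz: "E z z'" "{z, z'} = {c, c'}" for z z'
    proof -
      have z: "z \<in> {c,c'}" using zz by blast
      have "card (Aside V E z z') = Suc (\<Sum>v \<in> nb E z - {z'}. card (Aside V E v z))"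
        by (rule Aside_card_eq[OF tr zz(1)])
      moreover have "nb E z - {z'} = nb E z - {c,c'}" using zz E_irr[OF tr] unfolding nb_def by (auto simp: doubleton_eq_iff)
      ultimately have "card (Aside V E z z') = Suc (\<Sum>v \<in> nb E z - {c,c'}. Suc b)"
        using lA[OF z] by simp
      then show ?thesis using lcard[OF z] by simp
    qed
    have a1: "card (Aside V E c c') = Suc (l * Suc b)" using side[of c c'] e by auto
    have a2: "card (Aside V E c' c) = Suc (l * Suc b)" using side[of c' c] Esym[OF e] by auto
    have "n = 2 * Suc (l * Suc b)" using Aside_card[OF tr e] a1 a2 unfolding n_def by simp
    moreover have "l * Suc b \<ge> 1 * Suc b" using l1 by (intro mult_right_mono) auto
    ultimately have "n > 2 + 2 * b" by simp
    then have "int n > int (2 + 2 * b)" by (simp only: of_nat_less_iff)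
    moreover have "S c' - S c = int n - 2 * int (Suc (l * Suc b))"
      using status_diff[OF tr e] a2 unfolding S_def n_def by simp
    ultimately show ?thesis using \<open>n = 2 * Suc (l * Suc b)\<close> by simp
  qed
  have nbig: "int n > 2 + 2 * int b" using cent by simp
  have Scent: "S z = S c" if "z \<in> {c,c'}" for z using that cent by auto
  define s0 where "s0 = status V E c"
  define v1 where "v1 = s0 + n - 2 - 2 * b"
  define v2 where "v2 = s0 + 2 * n - 4 - 2 * b"
  have img: "status V E ` V = {s0, v1, v2}"
  proof
    show "status V E ` V \<subseteq> {s0, v1, v2}"
    proof
      fix y assume "y \<in> status V E ` V"
      then obtain x where x: "x \<in> V" "y = status V E x" by blast
      from cover[OF x(1)] show "y \<in> {s0, v1, v2}"
      proof (elim disjE bexE)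
        assume "x \<in> {c, c'}"
        then have "S x = S c" using Scent by blast
        then show ?thesis using x unfolding S_def s0_def by simp
      next
        fix z assume z: "z \<in> {c,c'}" and "x \<in> nb E z - {c, c'}"
        then have "S x = S c + int n - 2 * int (Suc b)" using Sleaf Scent by metis
        then have "status V E x = v1" using nbig unfolding S_def s0_def v1_def by arith
        then show ?thesis using x by simp
      next
        fix z v assume z: "z \<in> {c,c'}" and v: "v \<in> nb E z - {c, c'}" and w: "x \<in> nb E v - {z}"
        then have "S x = S c + int n - 2 * int (Suc b) + int n - 2" using Sleaf[OF z v] Spend[OF z v w] Scent[OF z] by simp
        then have "status V E x = v2" using nbig unfolding S_def s0_def v2_def by arith
        then show ?thesis using x by simp
      qed
    qed
  next
    have "c \<in> {c,c'}" by simp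
    moreover have "card (nb E c - {c,c'}) \<ge> 1" using lcard[of c] lcase by auto
    then obtain v0 where v0: "v0 \<in> nb E c - {c,c'}" by (metis all_not_in_conv card.empty not_one_le_zero)
    moreover have "card (nb E v0 - {c}) \<ge> 1" using bcard[of c v0] v0 b1 by simp
    then obtain w0 where w0: "w0 \<in> nb E v0 - {c}" by (metis all_not_in_conv card.empty not_one_le_zero)
    ultimately have "S v0 = S c + int n - 2 * int (Suc b)" "S w0 = S c + int n - 2 * int (Suc b) + int n - 2"
      using Sleaf Spend by auto
    moreover have "v0 \<in> V" "w0 \<in> V" using v0 w0 nb_V[OF tr] by auto
    ultimately have "status V E v0 = v1" "status V E w0 = v2"
      using nbig unfolding S_def s0_def v1_def v2_def by arith+
    then show "{s0, v1, v2} \<subseteq> status V E ` V"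
      using cV \<open>v0 \<in> V\<close> \<open>w0 \<in> V\<close> unfolding s0_def by (metis empty_subsetI image_eqI insert_subset)
  qed
  have "s0 < v1" "v1 < v2" using cent unfolding v1_def v2_def by auto
  then show ?thesis unfolding num_status_def img by simp
qed

end



lemma card_ge4: assumes "finite A" "a \<in> A" "b \<in> A" "c \<in> A" "d \<in> A" "(a::nat) < b" "b < c" "c < d"
  shows "card A \<ge> 4"
proof -
  have "card {a,b,c,d} = 4" using assms by simp
  moreover have "{a,b,c,d} \<subseteq> A" using assms by simp
  ultimately show ?thesis using card_mono[OF assms(1)] by metis
qed

lemma card_ge1: "finite A \<Longrightarrow> x \<in> A \<Longrightarrow> 1 \<le> card A"
  by (auto simp: Suc_le_eq card_gt_0_iff)

lemma STRUCT_I: assumes "c \<in> V" "c' \<in> V" "c = c' \<or> E c c'" "b \<ge> 1" "(c = c' \<and> l \<ge> 2) \<or> (c \<noteq> c' \<and> l \<ge> 1)"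
  "\<And>z. z \<in> {c,c'} \<Longrightarrow> card (nb E z - {c,c'}) = l"
  "\<And>z v. z \<in> {c,c'} \<Longrightarrow> v \<in> nb E z - {c,c'} \<Longrightarrow> card (nb E v - {z}) = b"
  "\<And>z v w. z \<in> {c,c'} \<Longrightarrow> v \<in> nb E z - {c,c'} \<Longrightarrow> w \<in> nb E v - {z} \<Longrightarrow> nb E w = {v}"
  "\<And>x. x \<in> V \<Longrightarrow> x \<in> {c,c'} \<or> (\<exists>z\<in>{c,c'}. x \<in> nb E z - {c,c'})
          \<or> (\<exists>z\<in>{c,c'}. \<exists>v\<in>nb E z - {c,c'}. x \<in> nb E v - {z})"
  shows "STRUCT V E c c' l b"
proof -
  have A6: "\<forall>z\<in>{c,c'}. card (nb E z - {c,c'}) = l" by (intro ballI) (rule assms(6))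
  have A7: "\<forall>z\<in>{c,c'}. \<forall>v\<in>nb E z - {c,c'}. card (nb E v - {z}) = b \<and> (\<forall>w\<in>nb E v - {z}. nb E w = {v})"
  proof (intro ballI conjI)
    fix z v w assume "z \<in> {c,c'}" "v \<in> nb E z - {c,c'}"
    then show "card (nb E v - {z}) = b" by (rule assms(7))
    assume "w \<in> nb E v - {z}"
    then show "nb E w = {v}" using \<open>z \<in> {c,c'}\<close> \<open>v \<in> nb E z - {c,c'}\<close> assms(8) by blast
  qed
  have A9: "\<forall>x\<in>V. x \<in> {c,c'} \<or> (\<exists>z\<in>{c,c'}. x \<in> nb E z - {c,c'})
          \<or> (\<exists>z\<in>{c,c'}. \<exists>v\<in>nb E z - {c,c'}. x \<in> nb E v - {z})" by (intro ballI) (rule assms(9))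
  show ?thesis unfolding STRUCT_def using assms(1-5) A6 A7 A9 by (intro conjI)
qed

context
  fixes V :: "'a set" and E :: "'a \<Rightarrow> 'a \<Rightarrow> bool"
  assumes tr: "is_tree V E"
begin

lemma dist_down: assumes "c \<in> V" shows "x \<in> V \<Longrightarrow> dist V E c x = m \<Longrightarrow> j \<le> m \<Longrightarrow> \<exists>y\<in>V. dist V E c y = j"
proof (induction m arbitrary: x)
  case 0 then show ?case by blast
next
  case (Suc m)
  show ?case
  proof (cases "j = Suc m")
    case True then show ?thesis using Suc.prems by blast
  next
    case False
    obtain u where u: "E u x" "dist V E c u = m" using dist_pred[OF tr assms Suc.prems(1,2)] by blast
    then have "u \<in> V" using E_V[OF tr] by blast
    then show ?thesis using Suc.IH[OF _ u(2)] Suc.prems False by simp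
  qed
qed

context
  fixes c c' :: 'a
  assumes cV: "c \<in> V" and c'V: "c' \<in> V" and cc: "c = c' \<or> E c c'"
    and cmin: "\<And>x. x \<in> V \<Longrightarrow> status V E c \<le> status V E x"
    and c'eq: "status V E c' = status V E c"
    and noeq: "c = c' \<Longrightarrow> \<forall>v\<in>nb E c. status V E v \<noteq> status V E c"
    and three: "num_status V E = 3"
begin

lemma Esym: "E x y \<Longrightarrow> E y x" using E_sym[OF tr] .

lemma leaf_gt: assumes z: "z \<in> {c,c'}" and v: "v \<in> nb E z - {c,c'}"
  shows "int (status V E v) > int (status V E c)"
proof -
  have e: "E z v" using v unfolding nb_def by simp
  show ?thesis
  proof (cases "c = c'")
    case True
    then have "z = c" using z by simp
    then have "status V E v \<noteq> status V E c" using noeq[OF True] v by blast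
    moreover have "status V E c \<le> status V E v" using cmin E_V[OF tr e] by blast
    ultimately show ?thesis by simp
  next
    case False
    define z' where "z' = (if z = c then c' else c)"
    have "E c c'" using cc False by simp
    then have "E z' z" using z Esym[of c c'] unfolding z'_def by auto
    moreover have "z' \<noteq> v" using v z unfolding z'_def by auto
    moreover have "status V E z = status V E c" "status V E z' = status V E c" using z c'eq unfolding z'_def by auto
    ultimately show ?thesis using convex[OF tr \<open>E z' z\<close> e] by simp
  qed
qed

lemma pend_gt: assumes z: "z \<in> {c,c'}" and v: "v \<in> nb E z - {c,c'}" and w: "w \<in> nb E v - {z}"
  shows "int (status V E w) - int (status V E v) > int (status V E v) - int (status V E c)"
proof -
  have "E z v" "E v w" "z \<noteq> w" using v w unfolding nb_def by auto
  moreover have "status V E z = status V E c" using z c'eq by auto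
  ultimately show ?thesis using convex[OF tr \<open>E z v\<close> \<open>E v w\<close> \<open>z \<noteq> w\<close>] by simp
qed

lemma img_fin: "finite (status V E ` V)" using V_fin[OF tr] by simp

lemma pend_nb: assumes z: "z \<in> {c,c'}" and v: "v \<in> nb E z - {c,c'}" and w: "w \<in> nb E v - {z}"
  shows "nb E w = {v}"
proof -
  have evw: "E v w" using w unfolding nb_def by simp
  have "u = v" if u: "E w u" for u
  proof (rule ccontr)
    assume "u \<noteq> v"
    then have "int (status V E u) - int (status V E w) > int (status V E w) - int (status V E v)"
      using convex[OF tr evw u] by simp
    moreover have "int (status V E w) - int (status V E v) > int (status V E v) - int (status V E c)"
      using pend_gt[OF z v w] .
    moreover have "int (status V E v) > int (status V E c)" using leaf_gt[OF z v] .
    ultimately have "status V E c < status V E v" "status V E v < status V E w" "status V E w < status V E u"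
      by linarith+
    moreover have "v \<in> V" "w \<in> V" "u \<in> V" using E_V[OF tr evw] E_V[OF tr u] by auto
    ultimately have "card (status V E ` V) \<ge> 4"
      using card_ge4[OF img_fin imageI[OF cV] imageI[of v] imageI[of w] imageI[of u]] by simp
    then show False using three unfolding num_status_def by simp
  qed
  moreover have "E w v" using Esym[OF evw] .
  ultimately show ?thesis unfolding nb_def by blast
qed

abbreviation "\<delta> \<equiv> dist V E c"

lemma d1: assumes "y \<in> V" "\<delta> y = 1" shows "E c y"
proof -
  obtain u where "E u y" "\<delta> u = 0" using dist_pred[OF tr cV assms(1)] assms(2) by auto
  moreover have "u \<in> V" using E_V[OF tr \<open>E u y\<close>] by simp
  ultimately show ?thesis using dist_0[OF tr cV] by metis
qed

lemma dcc': "\<delta> c' \<le> 1" using cc dist_self[OF tr cV] dist_edge[OF tr] by auto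

lemma d2: assumes "y \<in> V" "\<delta> y = 2"
  shows "\<exists>p1. E c p1 \<and> \<delta> p1 = 1 \<and> E p1 y \<and> ((p1 = c' \<and> y \<in> nb E c' - {c,c'}) \<or> (p1 \<in> nb E c - {c,c'} \<and> y \<in> nb E p1 - {c}))"
proof -
  obtain p1 where p1: "E p1 y" "\<delta> p1 = 1" using dist_pred[OF tr cV assms(1)] assms(2) by auto
  have p1V: "p1 \<in> V" using E_V[OF tr p1(1)] by simp
  have ecp: "E c p1" using d1[OF p1V p1(2)] .
  have yc: "y \<noteq> c" using assms dist_self[OF tr cV] by auto
  have yc': "y \<noteq> c'" using assms dcc' by auto
  have p1c: "p1 \<noteq> c" using p1 dist_self[OF tr cV] by auto
  show ?thesis
  proof (cases "p1 = c'")
    case True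
    then show ?thesis using p1 ecp yc yc' unfolding nb_def by auto
  next
    case False
    then show ?thesis using p1 ecp yc p1c unfolding nb_def by auto
  qed
qed

lemma d3: assumes "y \<in> V" "\<delta> y = 3"
  shows "\<exists>p2. p2 \<in> nb E c' - {c,c'} \<and> y \<in> nb E p2 - {c'} \<and> nb E y = {p2} \<and> \<delta> p2 = 2"
proof -
  obtain p2 where p2: "E p2 y" "\<delta> p2 = 2" using dist_pred[OF tr cV assms(1)] assms(2) by auto
  have p2V: "p2 \<in> V" using E_V[OF tr p2(1)] by simp
  obtain p1 where p1: "E c p1" "\<delta> p1 = 1" "E p1 p2"
     "(p1 = c' \<and> p2 \<in> nb E c' - {c,c'}) \<or> (p1 \<in> nb E c - {c,c'} \<and> p2 \<in> nb E p1 - {c})"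
    using d2[OF p2V p2(2)] by blast
  have yc': "y \<noteq> c'" using assms dcc' by auto
  show ?thesis
  proof (cases "p1 = c'")
    case True
    then have a: "p2 \<in> nb E c' - {c,c'}" using p1(4) by simp
    have b: "y \<in> nb E p2 - {c'}" using p2 yc' unfolding nb_def by simp
    have "nb E y = {p2}" using pend_nb[OF _ a b] by simp
    then show ?thesis using a b p2 by blast
  next
    case False
    then have a: "p1 \<in> nb E c - {c,c'}" and b: "p2 \<in> nb E p1 - {c}" using p1(4) by auto
    have "nb E p2 = {p1}" using pend_nb[OF _ a b] by simp
    then have "y = p1" using p2(1) unfolding nb_def by blast
    then show ?thesis using p1 assms by simp
  qed
qed

lemma no4: assumes "x \<in> V" shows "\<delta> x \<noteq> 4"
proof
  assume "\<delta> x = 4"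
  then obtain u where u: "E u x" "\<delta> u = 3" using dist_pred[OF tr cV assms] by auto
  have uV: "u \<in> V" using E_V[OF tr u(1)] by simp
  obtain p2 where "nb E u = {p2}" "\<delta> p2 = 2" using d3[OF uV u(2)] by blast
  then have "x = p2" using u(1) unfolding nb_def by blast
  then show False using \<open>\<delta> x = 4\<close> \<open>\<delta> p2 = 2\<close> by simp
qed

lemma le3: assumes "x \<in> V" shows "\<delta> x \<le> 3"
proof (rule ccontr)
  assume "\<not> \<delta> x \<le> 3"
  then obtain y where "y \<in> V" "\<delta> y = 4" using dist_down[OF cV assms refl, of 4] by auto
  then show False using no4 by blast
qed

lemma cover: assumes x: "x \<in> V"
  shows "x \<in> {c,c'} \<or> (\<exists>z\<in>{c,c'}. x \<in> nb E z - {c,c'}) \<or> (\<exists>z\<in>{c,c'}. \<exists>v\<in>nb E z - {c,c'}. x \<in> nb E v - {z})"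
proof -
  have "\<delta> x = 0 \<or> \<delta> x = 1 \<or> \<delta> x = 2 \<or> \<delta> x = 3" using le3[OF x] by auto
  then show ?thesis
  proof (elim disjE)
    assume "\<delta> x = 0" then have "x = c" using dist_0[OF tr cV x] by simp
    then show ?thesis by simp
  next
    assume a: "\<delta> x = 1"
    then have "E c x" using d1[OF x] by simp
    moreover have "x \<noteq> c" using a dist_self[OF tr cV] by auto
    ultimately show ?thesis unfolding nb_def by auto
  next
    assume "\<delta> x = 2"
    then show ?thesis using d2[OF x] by blast
  next
    assume "\<delta> x = 3"
    then show ?thesis using d3[OF x] by blast
  qed
qed


lemma pA: assumes "z \<in> {c,c'}" "v \<in> nb E z - {c,c'}" "w \<in> nb E v - {z}"
  shows "card (Aside V E w v) = 1"
proof -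
  have "E v w" using assms(3) unfolding nb_def by simp
  then have "E w v" by (rule Esym)
  then show ?thesis using Aside_card_eq[OF tr, of w v] pend_nb[OF assms] by simp
qed

lemma lA: assumes z: "z \<in> {c,c'}" and v: "v \<in> nb E z - {c,c'}"
  shows "card (Aside V E v z) = Suc (card (nb E v - {z}))"
proof -
  have "E z v" using v unfolding nb_def by simp
  then have "E v z" by (rule Esym)
  then have "card (Aside V E v z) = Suc (\<Sum>w \<in> nb E v - {z}. card (Aside V E w v))"
    by (rule Aside_card_eq[OF tr])
  also have "\<dots> = Suc (\<Sum>w \<in> nb E v - {z}. 1)" using pA[OF z v] by simp
  finally show ?thesis by simp
qed

lemma Sleaf: assumes z: "z \<in> {c,c'}" and v: "v \<in> nb E z - {c,c'}"
  shows "int (status V E v) = int (status V E c) + int (card V) - 2 * int (Suc (card (nb E v - {z})))"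
proof -
  have "E z v" using v unfolding nb_def by simp
  moreover have "status V E z = status V E c" using z c'eq by auto
  ultimately show ?thesis using status_diff[OF tr, of z v] lA[OF z v] by simp
qed

lemma Spend: assumes z: "z \<in> {c,c'}" and v: "v \<in> nb E z - {c,c'}" and w: "w \<in> nb E v - {z}"
  shows "int (status V E w) = int (status V E v) + int (card V) - 2"
proof -
  have "E v w" using w unfolding nb_def by simp
  then show ?thesis using status_diff[OF tr, of v w] pA[OF z v w] by simp
qed

lemma ex_pend: "\<exists>z\<in>{c,c'}. \<exists>v\<in>nb E z - {c,c'}. \<exists>w. w \<in> nb E v - {z}"
proof (rule ccontr)
  assume na: "\<not> ?thesis"
  have "status V E ` V \<subseteq> {status V E c, status V E c + card V - 2}"
  proof
    fix y assume "y \<in> status V E ` V"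
    then obtain x where x: "x \<in> V" "y = status V E x" by blast
    from cover[OF x(1)] show "y \<in> {status V E c, status V E c + card V - 2}"
    proof (elim disjE bexE)
      assume "x \<in> {c,c'}" then show ?thesis using x c'eq by auto
    next
      fix z assume z: "z \<in> {c,c'}" and v: "x \<in> nb E z - {c,c'}"
      then have "nb E x - {z} = {}" using na by blast
      then have "card (nb E x - {z}) = 0" by (simp only: card.empty)
      then have "int (status V E x) = int (status V E c) + int (card V) - 2" using Sleaf[OF z v] by simp
      then have "status V E x = status V E c + card V - 2" using cmin[OF x(1)] by arith
      then show ?thesis using x by simp
    next
      fix z v assume "z \<in> {c,c'}" "v \<in> nb E z - {c,c'}" "x \<in> nb E v - {z}"
      then show ?thesis using na by blast
    qed
  qed
  then have "card (status V E ` V) \<le> card {status V E c, status V E c + card V - 2}"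
    by (intro card_mono) simp_all
  moreover have "card {status V E c, status V E c + card V - 2} \<le> 2"
    by (cases "status V E c = status V E c + card V - 2") simp_all
  ultimately have "card (status V E ` V) \<le> 2" by linarith
  then show False using three unfolding num_status_def by simp
qed

lemma the_struct: "\<exists>l b. STRUCT V E c c' l b"
proof -
  obtain z0 v0 w0 where z0: "z0 \<in> {c,c'}" and v0: "v0 \<in> nb E z0 - {c,c'}" and w0: "w0 \<in> nb E v0 - {z0}"
    using ex_pend by blast
  define b where "b = card (nb E v0 - {z0})"
  have finnb: "\<And>x. finite (nb E x)" using nb_fin[OF tr] .
  have b1: "b \<ge> 1" unfolding b_def using card_ge1[OF _ w0] finnb by simp
  have v0V: "v0 \<in> V" and w0V: "w0 \<in> V" using v0 w0 nb_V[OF tr] by auto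
  have Sv0: "int (status V E v0) = int (status V E c) + int (card V) - 2 * int (Suc b)"
    using Sleaf[OF z0 v0] unfolding b_def .
  have Sw0: "int (status V E w0) = int (status V E v0) + int (card V) - 2" using Spend[OF z0 v0 w0] .
  have gt0: "int (status V E v0) > int (status V E c)" using leaf_gt[OF z0 v0] .
  have nbig: "int (card V) > 2 + 2 * int b" using Sv0 gt0 by simp
  have img: "status V E ` V = {status V E c, status V E v0, status V E w0}"
  proof -
    have sub: "{status V E c, status V E v0, status V E w0} \<subseteq> status V E ` V"
      using cV v0V w0V by blast
    have "card {status V E c, status V E v0, status V E w0} = 3"
      using Sv0 Sw0 gt0 nbig by simp
    then show ?thesis using card_subset_eq[OF img_fin sub] three unfolding num_status_def by simp
  qed
  have allb: "card (nb E v - {z}) = b" if z: "z \<in> {c,c'}" and v: "v \<in> nb E z - {c,c'}" for z v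
  proof -
    have vV: "v \<in> V" using v nb_V[OF tr] by auto
    have Sv: "int (status V E v) = int (status V E c) + int (card V) - 2 * int (Suc (card (nb E v - {z})))"
      using Sleaf[OF z v] .
    have "status V E v \<in> status V E ` V" using vV by simp
    then have "status V E v = status V E c \<or> status V E v = status V E v0 \<or> status V E v = status V E w0"
      using img by simp
    moreover have "status V E v \<noteq> status V E c" using leaf_gt[OF z v] by simp
    moreover have "status V E v \<noteq> status V E w0" using Sv Sw0 Sv0 nbig by simp
    ultimately have "status V E v = status V E v0" by simp
    then show ?thesis using Sv Sv0 by simp
  qed
  have nbc: "\<And>z. z \<in> {c,c'} \<Longrightarrow> nb E z - {c,c'} \<subseteq> V" using nb_V[OF tr] by blast
  show ?thesis
  proof (cases "c = c'")
    case True
    define l where "l = card (nb E c)"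
    have nbc': "nb E c - {c,c'} = nb E c" using True E_irr[OF tr] unfolding nb_def by auto
    have z0c: "z0 = c" using z0 True by simp
    have v0c: "v0 \<in> nb E c" using v0 z0c by simp
    have ecv: "E c v0" using v0c unfolding nb_def by simp
    have "card (Aside V E c v0) = Suc (\<Sum>v \<in> nb E c - {v0}. card (Aside V E v c))"
      by (rule Aside_card_eq[OF tr ecv])
    also have "\<dots> = Suc (\<Sum>v \<in> nb E c - {v0}. Suc b)"
    proof -
      have "card (Aside V E v c) = Suc b" if "v \<in> nb E c - {v0}" for v
      proof -
        have vv: "v \<in> nb E c - {c,c'}" using that nbc' by simp
        show ?thesis using lA[OF _ vv] allb[OF _ vv] by simp
      qed
      then show ?thesis by simp
    qed
    also have "\<dots> = Suc ((l - 1) * Suc b)" using v0c finnb unfolding l_def by simp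
    finally have a1: "card (Aside V E c v0) = Suc ((l - 1) * Suc b)" .
    have a2: "card (Aside V E v0 c) = Suc b" using lA[OF z0 v0] z0c b_def by simp
    have "card V = Suc b + Suc ((l - 1) * Suc b)" using Aside_card[OF tr ecv] a1 a2 by simp
    moreover have "l \<ge> 1" using card_ge1[OF _ v0c] finnb unfolding l_def by simp
    ultimately have nl: "card V = 1 + l * Suc b" by (cases l) auto
    have l2: "l \<ge> 2"
    proof (rule ccontr)
      assume "\<not> l \<ge> 2"
      then have "l = 1" using \<open>l \<ge> 1\<close> by simp
      then show False using nl nbig by simp
    qed
    have "STRUCT V E c c' l b"
    proof (rule STRUCT_I[OF cV c'V _ b1 _ _ allb pend_nb cover])
      show "c = c' \<or> E c c'" using True by simp
      show "(c = c' \<and> l \<ge> 2) \<or> (c \<noteq> c' \<and> l \<ge> 1)" using True l2 by simp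
      show "card (nb E z - {c,c'}) = l" if "z \<in> {c,c'}" for z using that True nbc' unfolding l_def by simp
    qed
    then show ?thesis by blast
  next
    case False
    have e: "E c c'" using cc False by simp
    have side: "card (Aside V E z z') = Suc (card (nb E z - {c,c'}) * Suc b)" if zz: "E z z'" "{z, z'} = {c, c'}" for z z'
    proof -
      have z: "z \<in> {c,c'}" using zz by blast
      have "card (Aside V E z z') = Suc (\<Sum>v \<in> nb E z - {z'}. card (Aside V E v z))"
        by (rule Aside_card_eq[OF tr zz(1)])
      moreover have "nb E z - {z'} = nb E z - {c,c'}" using zz E_irr[OF tr] unfolding nb_def
        by (auto simp: doubleton_eq_iff)
      moreover have "card (Aside V E v z) = Suc b" if "v \<in> nb E z - {c,c'}" for v
        using lA[OF z that] allb[OF z that] by simp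
      ultimately show ?thesis by simp
    qed
    have a1: "card (Aside V E c c') = Suc (card (nb E c - {c,c'}) * Suc b)" using side[of c c'] e by auto
    have a2: "card (Aside V E c' c) = Suc (card (nb E c' - {c,c'}) * Suc b)" using side[of c' c] Esym[OF e] by auto
    have "int (status V E c') - int (status V E c) = int (card V) - 2 * int (card (Aside V E c' c))"
      using status_diff[OF tr e] .
    then have "card (Aside V E c' c) = card (Aside V E c c')" using Aside_card[OF tr e] c'eq by simp
    then have "card (nb E c - {c,c'}) * Suc b = card (nb E c' - {c,c'}) * Suc b" using a1 a2 by linarith
    then have leq: "card (nb E c - {c,c'}) = card (nb E c' - {c,c'})" by (metis Zero_not_Suc mult_cancel2)
    define l where "l = card (nb E c - {c,c'})"
    have lz: "card (nb E z - {c,c'}) = l" if "z \<in> {c,c'}" for z using that leq unfolding l_def by auto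
    have "l \<ge> 1" using lz[OF z0] card_ge1[OF _ v0] finnb by simp
    have "STRUCT V E c c' l b"
      by (rule STRUCT_I[OF cV c'V _ b1 _ lz allb pend_nb cover]) (use e False \<open>l \<ge> 1\<close> in auto)
    then show ?thesis by blast
  qed
qed

end

end


lemma exists_struct: assumes tr: "is_tree V E" and three: "num_status V E = 3"
  shows "\<exists>c c' l b. STRUCT V E c c' l b"
proof -
  have fin: "finite V" using V_fin[OF tr] .
  have ne: "V \<noteq> {}" using tr unfolding is_tree_def connected_graph_def by blast
  obtain c where cV: "c \<in> V" and cm: "status V E c = Min (status V E ` V)"
    using Min_in[of "status V E ` V"] fin ne by (metis (no_types, lifting) finite_imageI image_iff image_is_empty)
  have cmin: "\<And>x. x \<in> V \<Longrightarrow> status V E c \<le> status V E x" using cm fin by simp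
  show ?thesis
  proof (cases "\<exists>c'\<in>nb E c. status V E c' = status V E c")
    case True
    then obtain c' where c': "c' \<in> nb E c" "status V E c' = status V E c" by blast
    have e: "E c c'" using c' unfolding nb_def by simp
    have c'V: "c' \<in> V" using E_V[OF tr e] by simp
    have "\<exists>l b. STRUCT V E c c' l b"
      by (rule the_struct[OF tr cV c'V _ cmin c'(2) _ three]) (use e E_irr[OF tr] in auto)
    then show ?thesis by blast
  next
    case False
    have "\<exists>l b. STRUCT V E c c l b"
      by (rule the_struct[OF tr cV cV _ cmin refl _ three]) (use False in auto)
    then show ?thesis by blast
  qed
qed



lemma mv_Ctr[simp]: "Ctr s \<in> model_verts C l b \<longleftrightarrow> s < C" by (auto simp: model_verts_def)
lemma mv_Lf[simp]: "Lf s i \<in> model_verts C l b \<longleftrightarrow> s < C \<and> i < l" by (auto simp: model_verts_def)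
lemma mv_Pd[simp]: "Pd s i j \<in> model_verts C l b \<longleftrightarrow> s < C \<and> i < l \<and> j < b" by (auto simp: model_verts_def)

lemma adj0_iff: "model_adj0 x y \<longleftrightarrow> (\<exists>s t. x = Ctr s \<and> y = Ctr t \<and> s < t) \<or> (\<exists>s i. x = Ctr s \<and> y = Lf s i)
   \<or> (\<exists>s i j. x = Lf s i \<and> y = Pd s i j)"
  by (cases x; cases y) auto

definition MN :: "nat \<Rightarrow> nat \<Rightarrow> nat \<Rightarrow> mvtx \<Rightarrow> mvtx set" where
  "MN C l b p = {q \<in> model_verts C l b. model_adj0 p q \<or> model_adj0 q p}"

lemma MN_Ctr: "s < C \<Longrightarrow> MN C l b (Ctr s) = {Ctr t | t. t < C \<and> t \<noteq> s} \<union> Lf s ` {..<l}"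
  unfolding MN_def adj0_iff by (auto simp: nat_neq_iff)

lemma MN_Lf: "s < C \<Longrightarrow> i < l \<Longrightarrow> MN C l b (Lf s i) = insert (Ctr s) (Pd s i ` {..<b})"
  unfolding MN_def adj0_iff by auto

lemma MN_Pd: "s < C \<Longrightarrow> i < l \<Longrightarrow> j < b \<Longrightarrow> MN C l b (Pd s i j) = {Lf s i}"
  unfolding MN_def adj0_iff by auto

context
  fixes V :: "'a set" and E :: "'a \<Rightarrow> 'a \<Rightarrow> bool" and C l b :: nat and h :: "mvtx \<Rightarrow> 'a"
  assumes tr: "is_tree V E" and bij: "bij_betw h (model_verts C l b) V"
    and adj: "\<And>p q. p \<in> model_verts C l b \<Longrightarrow> q \<in> model_verts C l b \<Longrightarrow> E (h p) (h q) \<longleftrightarrow> model_adj C l b p q"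
begin

abbreviation "M \<equiv> model_verts C l b"

lemma inj: "inj_on h M" using bij by (simp add: bij_betw_def)
lemma img: "h ` M = V" using bij by (simp add: bij_betw_def)

lemma nbh: assumes "p \<in> M" shows "nb E (h p) = h ` MN C l b p"
proof
  show "nb E (h p) \<subseteq> h ` MN C l b p"
  proof
    fix y assume "y \<in> nb E (h p)"
    then have e: "E (h p) y" unfolding nb_def by simp
    then have "y \<in> V" using E_V[OF tr] by blast
    then obtain q where q: "q \<in> M" "y = h q" using img by blast
    then have "model_adj C l b p q" using adj[OF assms q(1)] e by simp
    then show "y \<in> h ` MN C l b p" using q unfolding MN_def model_adj_def by blast
  qed
  show "h ` MN C l b p \<subseteq> nb E (h p)"
  proof
    fix y assume "y \<in> h ` MN C l b p"
    then obtain q where q: "q \<in> MN C l b p" "y = h q" by blast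
    then have "q \<in> M" "model_adj C l b p q" using assms unfolding MN_def model_adj_def by auto
    then show "y \<in> nb E (h p)" using adj[OF assms] q unfolding nb_def by simp
  qed
qed

lemma MN_sub: "MN C l b p \<subseteq> M" unfolding MN_def by auto

lemma img_diff: "A \<subseteq> M \<Longrightarrow> B \<subseteq> M \<Longrightarrow> h ` A - h ` B = h ` (A - B)"
  using inj_on_image_set_diff[OF inj] by blast

lemma fam_struct: assumes C: "(C = 1 \<and> l \<ge> 2) \<or> (C = 2 \<and> l \<ge> 1)" and b1: "b \<ge> 1"
  shows "STRUCT V E (h (Ctr 0)) (h (Ctr (C - 1))) l b"
proof -
  define c where "c = h (Ctr 0)"
  define c' where "c' = h (Ctr (C - 1))"
  define CS where "CS = {Ctr t | t. t < C}"
  have C0: "0 < C" using C by auto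
  have CSM: "CS \<subseteq> M" unfolding CS_def by auto
  have cc': "{c, c'} = h ` CS"
  proof -
    have "CS = {Ctr 0, Ctr (C - 1)}" unfolding CS_def using C by (auto simp: less_Suc_eq)
    then show ?thesis unfolding c_def c'_def by simp
  qed
  have hinj: "\<And>p q. p \<in> M \<Longrightarrow> q \<in> M \<Longrightarrow> h p = h q \<longleftrightarrow> p = q" using inj inj_on_eq_iff by metis
  have Zs: "z \<in> {c,c'} \<longleftrightarrow> (\<exists>s<C. z = h (Ctr s))" for z unfolding cc' CS_def by auto
  have leaves: "nb E (h (Ctr s)) - {c,c'} = h ` (Lf s ` {..<l})" if s: "s < C" for s
  proof -
    have "nb E (h (Ctr s)) - {c,c'} = h ` (MN C l b (Ctr s) - CS)"
      using nbh[of "Ctr s"] s img_diff[OF MN_sub CSM] cc' by simp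
    moreover have "MN C l b (Ctr s) - CS = Lf s ` {..<l}" using MN_Ctr[OF s] unfolding CS_def by auto
    ultimately show ?thesis by simp
  qed
  have pends: "nb E (h (Lf s i)) - {h (Ctr s)} = h ` (Pd s i ` {..<b})" if s: "s < C" "i < l" for s i
  proof -
    have "nb E (h (Lf s i)) - {h (Ctr s)} = h ` (MN C l b (Lf s i) - {Ctr s})"
      using nbh[of "Lf s i"] s img_diff[OF MN_sub, of "{Ctr s}" "Lf s i"] by simp
    moreover have "MN C l b (Lf s i) - {Ctr s} = Pd s i ` {..<b}" using MN_Lf[OF s] by auto
    ultimately show ?thesis by simp
  qed
  have card_l: "card (h ` (Lf s ` {..<l})) = l" if "s < C" for s
  proof -
    have "inj_on h (Lf s ` {..<l})" by (rule inj_on_subset[OF inj]) (use that in auto)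
    moreover have "inj_on (Lf s) {..<l}" by (simp add: inj_on_def)
    ultimately show ?thesis by (simp add: card_image)
  qed
  have card_b: "card (h ` (Pd s i ` {..<b})) = b" if "s < C" "i < l" for s i
  proof -
    have "inj_on h (Pd s i ` {..<b})" by (rule inj_on_subset[OF inj]) (use that in auto)
    moreover have "inj_on (Pd s i) {..<b}" by (simp add: inj_on_def)
    ultimately show ?thesis by (simp add: card_image)
  qed
  show ?thesis unfolding c_def[symmetric] c'_def[symmetric]
  proof (rule STRUCT_I)
    show "c \<in> V" "c' \<in> V" unfolding c_def c'_def using img C0 by auto
    show "c = c' \<or> E c c'"
    proof (cases "C = 1")
      case True then show ?thesis unfolding c_def c'_def by simp
    next
      case False
      then have "C = 2" using C by auto
      then show ?thesis unfolding c_def c'_def using adj[of "Ctr 0" "Ctr 1"] by (simp add: model_adj_def)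
    qed
    show "b \<ge> 1" by (rule b1)
    have "c = c' \<longleftrightarrow> C = 1" unfolding c_def c'_def using hinj[of "Ctr 0" "Ctr (C - 1)"] C0 C by auto
    then show "(c = c' \<and> l \<ge> 2) \<or> (c \<noteq> c' \<and> l \<ge> 1)" using C by auto
    show "card (nb E z - {c,c'}) = l" if "z \<in> {c,c'}" for z
      using that Zs leaves card_l by auto
    show "card (nb E v - {z}) = b" if zz: "z \<in> {c,c'}" and vv: "v \<in> nb E z - {c,c'}" for z v
    proof -
      obtain s where s: "s < C" "z = h (Ctr s)" using zz Zs by blast
      then obtain i where i: "i < l" "v = h (Lf s i)" using vv leaves by auto
      show ?thesis using pends[OF s(1) i(1)] card_b[OF s(1) i(1)] s i by simp
    qed
    show "nb E w = {v}" if zz: "z \<in> {c,c'}" and vv: "v \<in> nb E z - {c,c'}" and ww: "w \<in> nb E v - {z}" for z v w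
    proof -
      obtain s where s: "s < C" "z = h (Ctr s)" using zz Zs by blast
      then obtain i where i: "i < l" "v = h (Lf s i)" using vv leaves by auto
      then obtain j where j: "j < b" "w = h (Pd s i j)" using ww pends[OF s(1) i(1)] s by auto
      show ?thesis using nbh[of "Pd s i j"] MN_Pd[OF s(1) i(1) j(1)] s i j by simp
    qed
    show "x \<in> {c,c'} \<or> (\<exists>z\<in>{c,c'}. x \<in> nb E z - {c,c'})
          \<or> (\<exists>z\<in>{c,c'}. \<exists>v\<in>nb E z - {c,c'}. x \<in> nb E v - {z})" if xV: "x \<in> V" for x
    proof -
      obtain p where p: "p \<in> M" "x = h p" using img xV by blast
      show ?thesis
      proof (cases p)
        case (Ctr s) then show ?thesis using p Zs by auto
      next
        case (Lf s i)
        then have "s < C" "i < l" using p by auto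
        then have "x \<in> nb E (h (Ctr s)) - {c,c'}" "h (Ctr s) \<in> {c,c'}" using leaves Zs p Lf by auto
        then show ?thesis by blast
      next
        case (Pd s i j)
        then have sij: "s < C" "i < l" "j < b" using p by auto
        then have "h (Lf s i) \<in> nb E (h (Ctr s)) - {c,c'}" "h (Ctr s) \<in> {c,c'}"
          "x \<in> nb E (h (Lf s i)) - {h (Ctr s)}"
          using leaves Zs p Pd pends by auto
        then show ?thesis by blast
      qed
    qed
  qed
qed

end

lemma family_struct: assumes tr: "is_tree V E" and fam: "in_family V E"
  shows "\<exists>c c' l b. STRUCT V E c c' l b"
proof -
  obtain C l b f where b1: "b \<ge> 1" and C: "(C = 1 \<and> l \<ge> 2) \<or> (C = 2 \<and> l \<ge> 1)"
    and f: "bij_betw f V (model_verts C l b)"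
    and fa: "\<forall>x\<in>V. \<forall>y\<in>V. E x y \<longleftrightarrow> model_adj C l b (f x) (f y)"
    using fam unfolding in_family_def by (elim exE conjE) (rule that; assumption)
  define h where "h = inv_into V f"
  have hb: "bij_betw h (model_verts C l b) V" unfolding h_def by (rule bij_betw_inv_into[OF f])
  have ha: "E (h p) (h q) \<longleftrightarrow> model_adj C l b p q"
    if "p \<in> model_verts C l b" "q \<in> model_verts C l b" for p q
  proof -
    have hV: "h p \<in> V" "h q \<in> V" using hb that by (auto simp: bij_betw_def)
    have "f (h p) = p" "f (h q) = q" unfolding h_def using bij_betw_inv_into_right[OF f] that by auto
    then show ?thesis using fa[rule_format, OF hV] by simp
  qed
  show ?thesis using fam_struct[OF tr hb ha C b1] by blast
qed



context
  fixes V :: "'a set" and E :: "'a \<Rightarrow> 'a \<Rightarrow> bool" and c c' :: 'a and l b :: nat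
  assumes tr: "is_tree V E" and st: "STRUCT V E c c' l b"
begin

lemma cV6: "c \<in> V" and c'V6: "c' \<in> V" and cc6: "c = c' \<or> E c c'" and b16: "b \<ge> 1"
    and lcase6: "(c = c' \<and> l \<ge> 2) \<or> (c \<noteq> c' \<and> l \<ge> 1)"
  using STRUCT_D[OF st] by auto

lemmas lcard6 = STRUCT_lcard[OF st] and bcard6 = STRUCT_bcard[OF st] and pend6 = STRUCT_pend[OF st]
  and cover6 = STRUCT_cover[OF st]

lemma Esym6: "E x y \<Longrightarrow> E y x" using E_sym[OF tr] .
lemma Eirr6: "\<not> E x x" using E_irr[OF tr] .
lemma finnb6: "finite (nb E x)" using nb_fin[OF tr] .

definition CC where "CC = (if c = c' then 1 else (2::nat))"
definition ctr where "ctr s = (if s = 0 then c else c')"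
definition LS where "LS s = nb E (ctr s) - {c,c'}"
definition ee where "ee s = (SOME g. bij_betw g {..<l} (LS s))"
definition GG where "GG z v = (SOME g. bij_betw g {..<b} (nb E v - {z}))"
definition hh where "hh p = (case p of Ctr s \<Rightarrow> ctr s | Lf s i \<Rightarrow> ee s i | Pd s i j \<Rightarrow> GG (ctr s) (ee s i) j)"

lemma hh_simps[simp]: "hh (Ctr s) = ctr s" "hh (Lf s i) = ee s i" "hh (Pd s i j) = GG (ctr s) (ee s i) j"
  unfolding hh_def by simp_all

lemma ctrZ: "ctr s \<in> {c,c'}" unfolding ctr_def by simp
lemma Zctr: "z \<in> {c,c'} \<Longrightarrow> \<exists>s<CC. z = ctr s" unfolding ctr_def CC_def by (cases "c = c'") auto
lemma ctr_inj: "s < CC \<Longrightarrow> t < CC \<Longrightarrow> ctr s = ctr t \<longleftrightarrow> s = t" unfolding ctr_def CC_def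
  by (cases "c = c'") auto
lemma CC_pos: "0 < CC" unfolding CC_def by simp

lemma bij_ex: assumes "finite A" "card A = k" shows "\<exists>g. bij_betw g {..<k} A"
  using ex_bij_betw_nat_finite[OF assms(1)] assms(2) by (simp add: atLeast0LessThan)

lemma ee_bij: "bij_betw (ee s) {..<l} (LS s)"
proof -
  have "card (LS s) = l" unfolding LS_def using lcard6[OF ctrZ] .
  moreover have "finite (LS s)" unfolding LS_def using finnb6 by simp
  ultimately show ?thesis unfolding ee_def using bij_ex someI_ex by metis
qed

lemma GG_bij: assumes "z \<in> {c,c'}" "v \<in> nb E z - {c,c'}" shows "bij_betw (GG z v) {..<b} (nb E v - {z})"
proof -
  have "card (nb E v - {z}) = b" using bcard6[OF assms] .
  moreover have "finite (nb E v - {z})" using finnb6 by simp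
  ultimately show ?thesis unfolding GG_def using bij_ex someI_ex by metis
qed

lemma ee_in: "i < l \<Longrightarrow> ee s i \<in> LS s" using ee_bij[of s] by (auto simp: bij_betw_def)
lemma ee_inj: "i < l \<Longrightarrow> j < l \<Longrightarrow> ee s i = ee s j \<longleftrightarrow> i = j"
  using ee_bij[of s] by (auto simp: bij_betw_def inj_on_def)
lemma ee_surj: "v \<in> LS s \<Longrightarrow> \<exists>i<l. v = ee s i" using ee_bij[of s] by (auto simp: bij_betw_def)

lemma LS_leaf: "v \<in> LS s \<Longrightarrow> v \<in> nb E (ctr s) - {c,c'}" unfolding LS_def .

lemma GG_in: assumes "i < l" "j < b" shows "GG (ctr s) (ee s i) j \<in> nb E (ee s i) - {ctr s}"
  using GG_bij[OF ctrZ LS_leaf[OF ee_in[OF assms(1)]]] assms(2) by (auto simp: bij_betw_def)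
lemma GG_inj: assumes "i < l" "j < b" "j' < b"
  shows "GG (ctr s) (ee s i) j = GG (ctr s) (ee s i) j' \<longleftrightarrow> j = j'"
  using GG_bij[OF ctrZ LS_leaf[OF ee_in[OF assms(1)]]] assms(2,3) by (auto simp: bij_betw_def inj_on_def)
lemma GG_surj: assumes "i < l" "w \<in> nb E (ee s i) - {ctr s}" shows "\<exists>j<b. w = GG (ctr s) (ee s i) j"
  using GG_bij[OF ctrZ LS_leaf[OF ee_in[OF assms(1)]]] assms(2) by (auto simp: bij_betw_def)

lemma GG_nb: assumes "i < l" "j < b" shows "nb E (GG (ctr s) (ee s i) j) = {ee s i}"
  using pend6[OF ctrZ LS_leaf[OF ee_in[OF assms(1)]] GG_in[OF assms]] .

lemma D2: assumes z: "z \<in> {c,c'}" and v: "v \<in> nb E z - {c,c'}" and w: "w \<in> nb E v - {z}"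
  shows "w \<notin> {c,c'}"
proof
  assume wz: "w \<in> {c,c'}"
  have nw: "nb E w = {v}" using pend6[OF z v w] .
  show False
  proof (cases "c = c'")
    case True
    then have "w = c" using wz by simp
    then have "nb E c - {c,c'} \<subseteq> {v}" using nw by auto
    then have "card (nb E c - {c,c'}) \<le> 1" by (metis card.empty card.insert card_mono empty_iff finite.intros(1) finite_insert le_refl subset_singletonD One_nat_def)
    then show False using lcard6[of c] lcase6 True by simp
  next
    case False
    then have e: "E c c'" using cc6 by simp
    have "c' \<in> nb E c" "c \<in> nb E c'" using e Esym6[OF e] unfolding nb_def by auto
    then have "v = c' \<or> v = c" using wz nw by auto
    then show False using v by auto
  qed
qed

lemma D3: assumes z: "z \<in> {c,c'}" and v: "v \<in> nb E z - {c,c'}" and w: "w \<in> nb E v - {z}"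
  and z': "z' \<in> {c,c'}" and w': "w \<in> nb E z'"
  shows False
proof -
  have "nb E w = {v}" using pend6[OF z v w] .
  moreover have "z' \<in> nb E w" using w' Esym6 unfolding nb_def by auto
  ultimately show False using v z' by auto
qed

lemma D4: assumes "v \<in> LS s" "v \<in> LS t" "s < CC" "t < CC" shows "s = t"
proof (rule ccontr)
  assume st': "s \<noteq> t"
  then have ne: "c \<noteq> c'" using assms(3,4) unfolding CC_def by (cases "c = c'") auto
  have "{ctr s, ctr t} = {c,c'}" using st' assms(3,4) ne unfolding ctr_def CC_def by auto
  have vs: "v \<in> nb E (ctr s) - {c,c'}" and vt: "v \<in> nb E (ctr t) - {c,c'}" using assms(1,2) LS_leaf by auto
  have "ctr t \<in> nb E v - {ctr s}" using vt Esym6 ctr_inj[OF assms(4,3)] st' unfolding nb_def by auto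
  then have "nb E (ctr t) = {v}" using pend6[OF ctrZ vs] by blast
  moreover have "ctr s \<in> nb E (ctr t)" using cc6 ne Esym6 \<open>{ctr s, ctr t} = {c,c'}\<close> unfolding nb_def
    by (auto simp: doubleton_eq_iff)
  ultimately show False using vs ctrZ[of s] by auto
qed

abbreviation "MM \<equiv> model_verts CC l b"

lemma hh_V: "p \<in> MM \<Longrightarrow> hh p \<in> V"
proof (cases p)
  case (Ctr s) then show ?thesis using cV6 c'V6 ctrZ[of s] by auto
next
  case (Lf s i) then show "p \<in> MM \<Longrightarrow> ?thesis" using ee_in LS_leaf nb_V[OF tr] by fastforce
next
  case (Pd s i j) then show "p \<in> MM \<Longrightarrow> ?thesis" using GG_in nb_V[OF tr] by fastforce
qed

lemma hh_onto: "x \<in> V \<Longrightarrow> x \<in> hh ` MM"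
proof -
  assume x: "x \<in> V"
  from cover6[OF x] show ?thesis
  proof (elim disjE bexE)
    assume "x \<in> {c,c'}"
    then obtain s where "s < CC" "x = ctr s" using Zctr by blast
    then show ?thesis by (metis hh_simps(1) image_eqI mv_Ctr)
  next
    fix z assume z: "z \<in> {c,c'}" and xz: "x \<in> nb E z - {c,c'}"
    then obtain s where s: "s < CC" "z = ctr s" using Zctr by blast
    then have "x \<in> LS s" using xz unfolding LS_def by simp
    then obtain i where "i < l" "x = ee s i" using ee_surj by blast
    then show ?thesis using s by (metis hh_simps(2) image_eqI mv_Lf)
  next
    fix z v assume z: "z \<in> {c,c'}" and v: "v \<in> nb E z - {c,c'}" and xv: "x \<in> nb E v - {z}"
    then obtain s where s: "s < CC" "z = ctr s" using Zctr by blast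
    then have "v \<in> LS s" using v unfolding LS_def by simp
    then obtain i where i: "i < l" "v = ee s i" using ee_surj by blast
    then obtain j where "j < b" "x = GG (ctr s) (ee s i) j" using GG_surj xv s by blast
    then show ?thesis using s i by (metis hh_simps(3) image_eqI mv_Pd)
  qed
qed

lemma leaf_of: "i < l \<Longrightarrow> ee s i \<in> nb E (ctr s) - {c,c'}" using LS_leaf[OF ee_in] .
lemma pend_of: "i < l \<Longrightarrow> j < b \<Longrightarrow> GG (ctr s) (ee s i) j \<in> nb E (ee s i) - {ctr s}" using GG_in .

lemma Ctr_ne_Lf: "i < l \<Longrightarrow> ctr s \<noteq> ee t i" using leaf_of[of i t] ctrZ[of s] by auto
lemma Ctr_ne_Pd: "i < l \<Longrightarrow> j < b \<Longrightarrow> ctr s \<noteq> GG (ctr t) (ee t i) j"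
  using D2[OF ctrZ leaf_of pend_of] ctrZ[of s] by metis
lemma Lf_ne_Pd: assumes "i < l" "j < b" "i' < l" shows "ee s i' \<noteq> GG (ctr t) (ee t i) j"
proof
  assume eq: "ee s i' = GG (ctr t) (ee t i) j"
  have "ee s i' \<in> nb E (ctr s)" using leaf_of[OF assms(3), of s] by simp
  then show False using D3[OF ctrZ leaf_of[OF assms(1)] pend_of[OF assms(1,2)] ctrZ[of s]] eq by simp
qed
lemma Lf_eq: assumes "i < l" "i' < l" "s < CC" "t < CC" "ee s i = ee t i'" shows "s = t \<and> i = i'"
proof -
  have "ee s i \<in> LS t" using ee_in[OF assms(2), of t] assms(5) by simp
  then have "s = t" using D4[OF ee_in[OF assms(1)] _ assms(3,4)] by simp
  then show ?thesis using ee_inj[OF assms(1,2), of s] assms(5) by simp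
qed
lemma Pd_eq: assumes "i < l" "i' < l" "s < CC" "t < CC" "j < b" "j' < b"
  "GG (ctr s) (ee s i) j = GG (ctr t) (ee t i') j'" shows "s = t \<and> i = i' \<and> j = j'"
proof -
  have "{ee s i} = {ee t i'}" using GG_nb[OF assms(1,5), of s] GG_nb[OF assms(2,6), of t] assms(7) by simp
  then have "s = t \<and> i = i'" using Lf_eq assms by simp
  then show ?thesis using GG_inj assms by auto
qed

lemma hh_inj: "inj_on hh MM"
proof (rule inj_onI)
  fix p q assume p: "p \<in> MM" and q: "q \<in> MM" and eq: "hh p = hh q"
  show "p = q"
  proof (cases p)
    case (Ctr s)
    then show ?thesis
    proof (cases q)
      case (Ctr t) then show ?thesis using \<open>p = Ctr s\<close> p q eq ctr_inj by auto
    next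
      case (Lf t i) then show ?thesis using \<open>p = Ctr s\<close> q eq Ctr_ne_Lf by auto
    next
      case (Pd t i j) then show ?thesis using \<open>p = Ctr s\<close> q eq Ctr_ne_Pd by auto
    qed
  next
    case (Lf s i)
    then show ?thesis
    proof (cases q)
      case (Ctr t) then show ?thesis using \<open>p = Lf s i\<close> p eq Ctr_ne_Lf by (metis hh_simps mv_Lf)
    next
      case (Lf t i') then show ?thesis using \<open>p = Lf s i\<close> p q eq Lf_eq by auto
    next
      case (Pd t i' j) then show ?thesis using \<open>p = Lf s i\<close> p q eq Lf_ne_Pd[of i' j i s t] by auto
    qed
  next
    case (Pd s i j)
    then show ?thesis
    proof (cases q)
      case (Ctr t) then show ?thesis using \<open>p = Pd s i j\<close> p eq Ctr_ne_Pd by (metis hh_simps mv_Pd)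
    next
      case (Lf t i') then show ?thesis using \<open>p = Pd s i j\<close> p q eq Lf_ne_Pd by (metis hh_simps mv_Pd mv_Lf)
    next
      case (Pd t i' j') then show ?thesis using \<open>p = Pd s i j\<close> p q eq Pd_eq by auto
    qed
  qed
qed

lemma hh_bij: "bij_betw hh MM V"
  unfolding bij_betw_def using hh_inj hh_V hh_onto by blast

lemma ctr01: "CC = 2 \<Longrightarrow> ctr 0 = c \<and> ctr (Suc 0) = c' \<and> c \<noteq> c'" unfolding CC_def ctr_def by (auto split: if_splits)

lemma adj0_E: assumes p: "p \<in> MM" and q: "q \<in> MM" and a: "model_adj0 p q" shows "E (hh p) (hh q)"
proof -
  from a[unfolded adj0_iff] show ?thesis
  proof (elim disjE exE conjE)
    fix s t assume "p = Ctr s" "q = Ctr t" "s < t"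
    then have "s = 0" "t = 1" "CC = 2" using q unfolding CC_def by (auto split: if_splits)
    then have "hh p = c" "hh q = c'" "c \<noteq> c'" using ctr01 \<open>p = Ctr s\<close> \<open>q = Ctr t\<close> by auto
    then show ?thesis using cc6 by simp
  next
    fix s i assume "p = Ctr s" "q = Lf s i"
    then show ?thesis using q leaf_of[of i s] unfolding nb_def by auto
  next
    fix s i j assume "p = Lf s i" "q = Pd s i j"
    then show ?thesis using q pend_of[of i j s] unfolding nb_def by auto
  qed
qed

lemma E_adj0_dir: assumes p: "p \<in> MM" and q: "q \<in> MM" and e: "E (hh p) (hh q)"
  shows "model_adj0 p q \<or> model_adj0 q p"
proof (cases p)
  case (Ctr s)
  then have s: "s < CC" using p by simp
  show ?thesis
  proof (cases q)
    case (Ctr t)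
    then have "s \<noteq> t" using e \<open>p = Ctr s\<close> Eirr6 by auto
    then show ?thesis using \<open>p = Ctr s\<close> Ctr by (auto simp: nat_neq_iff)
  next
    case (Lf t i)
    then have ti: "t < CC" "i < l" using q by auto
    have "ee t i \<in> LS s" unfolding LS_def using e \<open>p = Ctr s\<close> Lf leaf_of[OF ti(2), of t] unfolding nb_def by auto
    then have "s = t" using D4[OF _ ee_in[OF ti(2)] s ti(1)] by simp
    then show ?thesis using \<open>p = Ctr s\<close> Lf by simp
  next
    case (Pd t i j)
    then have tij: "t < CC" "i < l" "j < b" using q by auto
    have "ctr s \<in> nb E (GG (ctr t) (ee t i) j)" using e \<open>p = Ctr s\<close> Pd Esym6 unfolding nb_def by auto
    then have "ctr s = ee t i" using GG_nb[OF tij(2,3), of t] by simp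
    then show ?thesis using Ctr_ne_Lf[OF tij(2), of s t] by simp
  qed
next
  case (Lf s i)
  then have si: "s < CC" "i < l" using p by auto
  show ?thesis
  proof (cases q)
    case (Ctr t)
    then have "t < CC" using q by simp
    have "ee s i \<in> LS t" unfolding LS_def using e \<open>p = Lf s i\<close> Ctr leaf_of[OF si(2), of s] Esym6 unfolding nb_def by auto
    then have "s = t" using D4[OF ee_in[OF si(2)] _ si(1) \<open>t < CC\<close>] by simp
    then show ?thesis using \<open>p = Lf s i\<close> Ctr by simp
  next
    case (Lf t i')
    then have ti: "t < CC" "i' < l" using q by auto
    have w: "ee t i' \<in> nb E (ee s i) - {ctr s}" using e \<open>p = Lf s i\<close> Lf leaf_of[OF ti(2), of t] ctrZ[of s]
      unfolding nb_def by auto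
    have "ee t i' \<in> nb E (ctr t)" using leaf_of[OF ti(2), of t] by simp
    then show ?thesis using D3[OF ctrZ leaf_of[OF si(2)] w ctrZ[of t]] by simp
  next
    case (Pd t i' j)
    then have tij: "t < CC" "i' < l" "j < b" using q by auto
    have "ee s i \<in> nb E (GG (ctr t) (ee t i') j)" using e \<open>p = Lf s i\<close> Pd Esym6 unfolding nb_def by auto
    then have "ee s i = ee t i'" using GG_nb[OF tij(2,3), of t] by simp
    then have "s = t \<and> i = i'" using Lf_eq si tij by blast
    then show ?thesis using \<open>p = Lf s i\<close> Pd by simp
  qed
next
  case (Pd s i j)
  then have sij: "s < CC" "i < l" "j < b" using p by auto
  have nbp: "nb E (hh p) = {ee s i}" using GG_nb[OF sij(2,3)] Pd by simp
  have "hh q \<in> nb E (hh p)" using e unfolding nb_def by simp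
  then have hq: "hh q = ee s i" using nbp by simp
  show ?thesis
  proof (cases q)
    case (Ctr t) then show ?thesis using hq Ctr_ne_Lf[OF sij(2), of t s] by simp
  next
    case (Lf t i')
    then have "t < CC" "i' < l" using q by auto
    then have "t = s \<and> i' = i" using Lf_eq[of i' i t s] hq Lf sij by simp
    then show ?thesis using Pd Lf by simp
  next
    case (Pd t i' j')
    then have "i' < l" "j' < b" using q by auto
    then show ?thesis using hq Lf_ne_Pd[of i' j' i s t] Pd sij by simp
  qed
qed

lemma hh_adj: assumes p: "p \<in> MM" and q: "q \<in> MM" shows "E (hh p) (hh q) \<longleftrightarrow> model_adj CC l b p q"
proof
  assume "E (hh p) (hh q)"
  then show "model_adj CC l b p q" using E_adj0_dir[OF p q] p q unfolding model_adj_def by simp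
next
  assume "model_adj CC l b p q"
  then have "model_adj0 p q \<or> model_adj0 q p" unfolding model_adj_def by simp
  then show "E (hh p) (hh q)" using adj0_E[OF p q] adj0_E[OF q p] Esym6 by blast
qed

lemma struct_family: "in_family V E"
proof -
  define f where "f = inv_into MM hh"
  have fb: "bij_betw f V MM" unfolding f_def by (rule bij_betw_inv_into[OF hh_bij])
  have fa: "\<forall>x\<in>V. \<forall>y\<in>V. E x y \<longleftrightarrow> model_adj CC l b (f x) (f y)"
  proof (intro ballI)
    fix x y assume x: "x \<in> V" and y: "y \<in> V"
    have "f x \<in> MM" "f y \<in> MM" using fb x y by (auto simp: bij_betw_def)
    moreover have "hh (f x) = x" "hh (f y) = y" unfolding f_def using bij_betw_inv_into_right[OF hh_bij] x y by auto
    ultimately show "E x y \<longleftrightarrow> model_adj CC l b (f x) (f y)" using hh_adj by metis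
  qed
  have "(CC = 1 \<and> l \<ge> 2) \<or> (CC = 2 \<and> l \<ge> 1)" using lcase6 unfolding CC_def by auto
  then show ?thesis unfolding in_family_def using b16 fb fa by blast
qed

end


theorem theorem3p6:
  fixes V :: "'a set" and E :: "'a \<Rightarrow> 'a \<Rightarrow> bool" and n :: nat
  assumes "is_tree V E" and "card V = n"
  shows "num_status V E = 3 \<longleftrightarrow> in_family V E"
proof
  assume three: "num_status V E = 3"
  obtain c c' l b where st: "STRUCT V E c c' l b" using exists_struct[OF assms(1) three] by blast
  show "in_family V E" by (rule struct_family[OF assms(1) st])
next
  assume fam: "in_family V E"
  obtain c c' l b where st: "STRUCT V E c c' l b" using family_struct[OF assms(1) fam] by blast
  show "num_status V E = 3" by (rule struct_status[OF assms(1) st])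
qed

end
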